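(* Let $n\in\mathbb N$ be even. On $\pm[n]:=\{-n,\ldots,-1,1,\ldots,n\}$ let $$\tau_0=(1,-1)(2,-2)\cdots(n,-n),\qquad \tau_2=(-1,2)(-2,3)\cdots(-(n-1),n)(-n,1),$$ and let $\widetilde{1}_n=(1,2,\ldots,n)(-n,-n+1,\ldots,-1)$. Let $b_1(n)$ be the set of fixed-point-free involutions $\tau_1$ of $\pm[n]$ such that $\#(\tau_2\tau_1)=n$, $\tau_0\tau_1=\tau_1\tau_0$, $\tau_0\tau_1$ is fixed-point free, and there exists $a\in[n]$ with $\tau_1(a)\in[n]$. Let $\mathrm{NC}_2^\delta(n,-n)$ be the set of fixed-point-free involutions $\pi$ of $\pm[n]$ such that: (i) the group $\langle \pi,\widetilde 1_n\rangle$ acts transitively on $\pm[n]$; (ii) $\#(\pi)+\#(\pi^{-1}\widetilde{1}_n)+\#(\widetilde 1_n)=2n+2$; (iii) for no $r\in[n]$ is $(-r,r)$ a cycle of $\pi$; (iv) whenever $(r,s)$ is a cycle of $\pi$, so is $(-s,-r)$. Then the map $\varphi_1:b_1(n)\to\mathrm{NC}_2^\delta(n,-n)$, $\tau_1\mapsto\tau_1\tau_0$, is well defined and is a bijection.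
   Context: Permutations are composed right to left, i.e. $(\sigma\rho)(x)=\sigma(\rho(x))$. For a permutation $\sigma$, $\#(\sigma)$ denotes its number of cycles, with fixed points counted as cycles. $[n]=\{1,\ldots,n\}$. The set $b_1(n)$ is a combinatorial encoding of the non-orientable ribbon graphs of Euler genus $1$ built from one $n$-gon, and $\mathrm{NC}_2^\delta(n,-n)$ is the set of symmetric non-crossing annular pairings of $\pm[n]$. *)

theory Defs
  imports "HOL-Combinatorics.Permutations"
begin

text \<open>Permutations of the finite set pm n = {-n..-1} \<union> {1..n} are modelled as
  functions int \<Rightarrow> int that permute pm n (identity outside).
  Composition is right to left: (\<sigma> \<circ> \<rho>) x = \<sigma> (\<rho> x).\<close>

definition pm :: "nat \<Rightarrow> int set" where
  "pm n = {x. 1 \<le> \<bar>x\<bar> \<and> \<bar>x\<bar> \<le> int n}"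

definition pos :: "nat \<Rightarrow> int set" where
  "pos n = {1..int n}"

definition tau0 :: "nat \<Rightarrow> int \<Rightarrow> int" where
  "tau0 n x = (if x \<in> pm n then - x else x)"

text \<open>tau2 = (-1,2)(-2,3)...(-(n-1),n)(-n,1)\<close>
definition tau2 :: "nat \<Rightarrow> int \<Rightarrow> int" where
  "tau2 n x = (if x \<in> pm n then
      (if x < 0 then (if x = - int n then 1 else - x + 1)
       else (if x = 1 then - int n else - (x - 1)))
    else x)"

text \<open>one_tilde n = (1,2,...,n)(-n,-n+1,...,-1)\<close>
definition one_tilde :: "nat \<Rightarrow> int \<Rightarrow> int" where
  "one_tilde n x = (if x \<in> pm n then
      (if x > 0 then (if x = int n then 1 else x + 1)
       else (if x = -1 then - int n else x + 1))
    else x)"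

definition cyc :: "('a \<Rightarrow> 'a) \<Rightarrow> 'a \<Rightarrow> 'a set" where
  "cyc \<sigma> x = {(\<sigma> ^^ k) x | k. True}"

definition ncycles :: "'a set \<Rightarrow> ('a \<Rightarrow> 'a) \<Rightarrow> nat" where
  "ncycles A \<sigma> = card {cyc \<sigma> x | x. x \<in> A}"

definition fpf_involution :: "'a set \<Rightarrow> ('a \<Rightarrow> 'a) \<Rightarrow> bool" where
  "fpf_involution A f \<longleftrightarrow> f permutes A \<and> (\<forall>x\<in>A. f (f x) = x \<and> f x \<noteq> x)"

inductive_set gen_group :: "('a \<Rightarrow> 'a) set \<Rightarrow> ('a \<Rightarrow> 'a) set" for Gs where
  gen_id: "id \<in> gen_group Gs"
| gen_mult: "\<lbrakk>s \<in> gen_group Gs; g \<in> Gs\<rbrakk> \<Longrightarrow> s \<circ> g \<in> gen_group Gs"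
| gen_mult_inv: "\<lbrakk>s \<in> gen_group Gs; g \<in> Gs\<rbrakk> \<Longrightarrow> s \<circ> inv g \<in> gen_group Gs"

definition b1 :: "nat \<Rightarrow> (int \<Rightarrow> int) set" where
  "b1 n = {t1. fpf_involution (pm n) t1
             \<and> ncycles (pm n) (tau2 n \<circ> t1) = n
             \<and> tau0 n \<circ> t1 = t1 \<circ> tau0 n
             \<and> (\<forall>x\<in>pm n. (tau0 n \<circ> t1) x \<noteq> x)
             \<and> (\<exists>a\<in>pos n. t1 a \<in> pos n)}"

definition NC2delta :: "nat \<Rightarrow> (int \<Rightarrow> int) set" where
  "NC2delta n = {\<pi>. fpf_involution (pm n) \<pi>
      \<and> (\<forall>x\<in>pm n. \<forall>y\<in>pm n. \<exists>g\<in>gen_group {\<pi>, one_tilde n}. g x = y)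
      \<and> ncycles (pm n) \<pi> + ncycles (pm n) (inv \<pi> \<circ> one_tilde n)
          + ncycles (pm n) (one_tilde n) = 2 * n + 2
      \<and> (\<forall>r\<in>pos n. \<not> (\<pi> (- r) = r))
      \<and> (\<forall>r\<in>pm n. \<forall>s\<in>pm n. r \<noteq> s \<and> \<pi> r = s \<longrightarrow> \<pi> (- s) = - r)}"

end

theory Submission
  imports Defs
begin


definition one_inv :: "nat \<Rightarrow> int \<Rightarrow> int" where
  "one_inv n x = (if x \<in> pm n then
      (if x > 0 then (if x = 1 then int n else x - 1)
       else (if x = - int n then -1 else x - 1))
    else x)"

lemma T_T: "tau0 n \<circ> tau0 n = id"
  by (auto simp: fun_eq_iff tau0_def pm_def)

lemma T_mem: "tau0 n x \<in> pm n \<longleftrightarrow> x \<in> pm n"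
  by (auto simp: tau0_def pm_def)

lemma tau2_eq: "tau2 n = tau0 n \<circ> one_inv n"
  by (auto simp: fun_eq_iff tau2_def tau0_def one_inv_def pm_def)

lemma TOT: "tau0 n \<circ> one_tilde n \<circ> tau0 n = one_inv n"
proof
  fix x
  show "(tau0 n \<circ> one_tilde n \<circ> tau0 n) x = one_inv n x"
    by (cases "x \<in> pm n"; cases "x > 0") (auto simp: one_tilde_def tau0_def one_inv_def pm_def)
qed

lemma O_Oi: "one_tilde n \<circ> one_inv n = id"
  by (auto simp: fun_eq_iff one_tilde_def one_inv_def pm_def)

lemma Oi_O: "one_inv n \<circ> one_tilde n = id"
  by (auto simp: fun_eq_iff one_tilde_def one_inv_def pm_def)

lemma inv_O: "inv (one_tilde n) = one_inv n"
  by (rule inv_unique_comp[OF O_Oi Oi_O])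

lemma card_pm: "card (pm n) = 2 * n"
proof -
  have "pm n = {-int n..-1} \<union> {1..int n}" by (auto simp: pm_def)
  moreover have "card ({-int n..-1} \<union> {1..int n}) = 2 * n"
    by (subst card_Un_disjoint) auto
  ultimately show ?thesis by simp
qed

lemma finite_pm: "finite (pm n)"
proof -
  have "pm n \<subseteq> {-int n..int n}" by (auto simp: pm_def)
  then show ?thesis using finite_subset by blast
qed

lemma inv_perm_permutes:
  assumes "\<forall>x. x \<notin> S \<longrightarrow> f x = x" "f \<circ> f = id"
  shows "f permutes S"
  unfolding permutes_def
proof (intro conjI allI impI)
  fix x assume "x \<notin> S" then show "f x = x" using assms by auto
next
  fix y show "\<exists>!x. f x = y"
    using assms(2) by (metis comp_apply id_apply)
qed

lemma T_permutes: "tau0 n permutes pm n"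
  by (rule inv_perm_permutes) (auto simp: tau0_def T_T)

lemma pow_conj:
  assumes "h \<circ> h = id"
  shows "(h \<circ> s \<circ> h) ^^ k = h \<circ> (s ^^ k) \<circ> h"
proof (induction k)
  case 0 then show ?case using assms by simp
next
  case (Suc k)
  have hh: "h (h y) = y" for y using assms by (metis comp_apply id_apply)
  show ?case
  proof
    fix x
    have "((h \<circ> s \<circ> h) ^^ Suc k) x = h (s (h (((h \<circ> s \<circ> h) ^^ k) x)))" by simp
    also have "\<dots> = h (s (h (h ((s ^^ k) (h x)))))" using Suc.IH by (metis comp_apply)
    also have "\<dots> = (h \<circ> (s ^^ Suc k) \<circ> h) x" by (simp add: hh)
    finally show "((h \<circ> s \<circ> h) ^^ Suc k) x = (h \<circ> (s ^^ Suc k) \<circ> h) x" .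
  qed
qed

lemma cyc_conj:
  assumes "h \<circ> h = id"
  shows "cyc (h \<circ> s \<circ> h) (h x) = h ` cyc s x"
proof -
  have hh: "h (h y) = y" for y using assms by (metis comp_apply id_apply)
  show ?thesis
    unfolding cyc_def pow_conj[OF assms] by (auto simp: hh)
qed

lemma ncycles_conj:
  assumes "h \<circ> h = id" "\<And>x. h x \<in> A \<longleftrightarrow> x \<in> A"
  shows "ncycles A (h \<circ> s \<circ> h) = ncycles A s"
proof -
  have hh: "h (h y) = y" for y using assms by (metis comp_apply id_apply)
  have inj: "inj h" by (metis hh injI)
  have "{cyc (h \<circ> s \<circ> h) y | y. y \<in> A} = {cyc (h \<circ> s \<circ> h) (h x) | x. x \<in> A}"
    using assms(2) hh by metis
  also have "\<dots> = (\<lambda>S. h ` S) ` {cyc s x | x. x \<in> A}"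
    by (auto simp: cyc_conj[OF assms(1)])
  finally have eq: "{cyc (h \<circ> s \<circ> h) y | y. y \<in> A} = (\<lambda>S. h ` S) ` {cyc s x | x. x \<in> A}" .
  have "inj_on (\<lambda>S. h ` S) X" for X
    by (meson inj inj_image_eq_iff inj_onI)
  then show ?thesis unfolding ncycles_def eq by (simp add: card_image)
qed

lemma pow_inv: "f \<circ> f = id \<Longrightarrow> (f ^^ k) x = (if even k then x else f x)"
  by (induction k) (auto simp: fun_eq_iff)

lemma ncycles_invol:
  assumes "f \<circ> f = id" "\<And>x. x \<in> A \<Longrightarrow> f x \<in> A" "\<And>x. x \<in> A \<Longrightarrow> f x \<noteq> x" "finite A"
  shows "2 * ncycles A f = card A"
proof -
  have ff: "f (f y) = y" for y using assms by (metis comp_apply id_apply)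
  have cy: "cyc f x = {x, f x}" for x
  proof -
    have "x \<in> cyc f x" unfolding cyc_def by (auto intro!: exI[of _ 0])
    moreover have "f x \<in> cyc f x" unfolding cyc_def by (auto intro!: exI[of _ 1])
    moreover have "cyc f x \<subseteq> {x, f x}" unfolding cyc_def pow_inv[OF assms(1)] by auto
    ultimately show ?thesis by blast
  qed
  let ?C = "{cyc f x | x. x \<in> A}"
  have C: "?C = (\<lambda>x. {x, f x}) ` A" by (auto simp: cy)
  have h1: "finite ?C" unfolding C using assms by simp
  have h2: "finite (\<Union>?C)" unfolding C using assms by auto
  have h3: "\<forall>c\<in>?C. card c = 2" unfolding C
  proof (intro ballI)
    fix c assume "c \<in> (\<lambda>x. {x, f x}) ` A"
    then obtain x where "x \<in> A" "c = {x, f x}" by auto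
    then show "card c = 2" using assms(3)[of x] by auto
  qed
  have h4: "\<forall>c1\<in>?C. \<forall>c2\<in>?C. c1 \<noteq> c2 \<longrightarrow> c1 \<inter> c2 = {}" unfolding C
    by (auto simp: ff) (metis ff)+
  have "2 * card ?C = card (\<Union>?C)"
    by (rule card_partition[OF h1 h2]) (use h3 h4 in auto)
  moreover have "\<Union>?C = A" unfolding C using assms(2) by auto
  ultimately show ?thesis by (simp add: ncycles_def)
qed


lemma pm_split: "pm n = pos n \<union> {-int n..-1}"
  by (auto simp: pm_def pos_def)

lemma O_pow_pos:
  assumes "x \<in> pos n"
  shows "(one_tilde n ^^ k) x = (x - 1 + int k) mod int n + 1"
proof (induction k)
  case 0 then show ?case using assms by (simp add: pos_def)
next
  case (Suc k)
  define m where "m = (x - 1 + int k) mod int n"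
  have np: "int n > 0" using assms by (simp add: pos_def)
  have m0: "0 \<le> m" "m < int n" unfolding m_def using np by auto
  have e: "(x - 1 + int (Suc k)) mod int n = (m + 1) mod int n"
    unfolding m_def by (simp add: mod_add_left_eq add.assoc)
  have "(one_tilde n ^^ Suc k) x = one_tilde n (m + 1)" using Suc by (simp add: m_def)
  also have "\<dots> = (m + 1) mod int n + 1"
  proof (cases "m + 1 = int n")
    case True then show ?thesis using np by (simp add: one_tilde_def pm_def)
  next
    case False then show ?thesis using m0 by (simp add: one_tilde_def pm_def)
  qed
  finally show ?case using e by simp
qed

lemma O_pow_neg:
  assumes "x \<in> {-int n..-1}"
  shows "(one_tilde n ^^ k) x = (x + int k) mod int n - int n"
proof (induction k)
  case 0
  have "x mod int n = (x + int n) mod int n" by simp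
  also have "\<dots> = x + int n" using assms by (intro mod_pos_pos_trivial) auto
  finally have "x mod int n = x + int n" .
  then show ?case by simp
next
  case (Suc k)
  define m where "m = (x + int k) mod int n"
  have np: "int n > 0" using assms by auto
  have m0: "0 \<le> m" "m < int n" unfolding m_def using np by auto
  have e0: "x + int (Suc k) = (x + int k) + 1" by simp
  have e: "(x + int (Suc k)) mod int n = (m + 1) mod int n"
    unfolding m_def e0 by (simp add: mod_add_left_eq)
  have "(one_tilde n ^^ Suc k) x = one_tilde n (m - int n)" using Suc by (simp add: m_def)
  also have "\<dots> = (m + 1) mod int n - int n"
  proof (cases "m + 1 = int n")
    case True then show ?thesis using np by (simp add: one_tilde_def pm_def)
  next
    case False then show ?thesis using m0 by (simp add: one_tilde_def pm_def)
  qed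
  finally show ?case using e by simp
qed

lemma reach_pos:
  assumes "x \<in> pos n" "z \<in> pos n"
  shows "(one_tilde n ^^ nat ((z - x) mod int n)) x = z"
proof -
  have np: "int n > 0" using assms by (simp add: pos_def)
  have "(x - 1 + (z - x) mod int n) mod int n = (z - 1) mod int n"
    by (simp add: mod_add_right_eq)
  also have "\<dots> = z - 1" using assms(2) by (simp add: pos_def)
  finally show ?thesis using np by (simp add: O_pow_pos[OF assms(1)])
qed

lemma reach_neg:
  assumes "x \<in> {-int n..-1}" "z \<in> {-int n..-1}"
  shows "(one_tilde n ^^ nat ((z - x) mod int n)) x = z"
proof -
  have np: "int n > 0" using assms by auto
  have "(x + (z - x) mod int n) mod int n = z mod int n"
    by (simp add: mod_add_right_eq)
  also have "\<dots> = (z + int n) mod int n" by simp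
  also have "\<dots> = z + int n" using assms(2) by (intro mod_pos_pos_trivial) auto
  finally show ?thesis using np by (simp add: O_pow_neg[OF assms(1)])
qed

lemma cyc_O_pos:
  assumes "x \<in> pos n" shows "cyc (one_tilde n) x = pos n"
proof
  have np: "int n > 0" using assms by (simp add: pos_def)
  show "cyc (one_tilde n) x \<subseteq> pos n"
  proof
    fix y assume "y \<in> cyc (one_tilde n) x"
    then obtain k where "y = (x - 1 + int k) mod int n + 1"
      unfolding cyc_def O_pow_pos[OF assms] by auto
    moreover have "(x - 1 + int k) mod int n < int n" "0 \<le> (x - 1 + int k) mod int n"
      using np by auto
    ultimately show "y \<in> pos n" by (simp add: pos_def)
  qed
  show "pos n \<subseteq> cyc (one_tilde n) x"
  proof
    fix z assume z: "z \<in> pos n"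
    have "z = (one_tilde n ^^ nat ((z - x) mod int n)) x" using reach_pos[OF assms z] by simp
    then show "z \<in> cyc (one_tilde n) x" unfolding cyc_def by blast
  qed
qed

lemma cyc_O_neg:
  assumes "x \<in> {-int n..-1}" shows "cyc (one_tilde n) x = {-int n..-1}"
proof
  have np: "int n > 0" using assms by auto
  show "cyc (one_tilde n) x \<subseteq> {-int n..-1}"
  proof
    fix y assume "y \<in> cyc (one_tilde n) x"
    then obtain k where "y = (x + int k) mod int n - int n"
      unfolding cyc_def O_pow_neg[OF assms] by auto
    moreover have "(x + int k) mod int n < int n" "0 \<le> (x + int k) mod int n"
      using np by auto
    ultimately show "y \<in> {-int n..-1}" by simp
  qed
  show "{-int n..-1} \<subseteq> cyc (one_tilde n) x"
  proof
    fix z assume z: "z \<in> {-int n..-1}"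
    have "z = (one_tilde n ^^ nat ((z - x) mod int n)) x" using reach_neg[OF assms z] by simp
    then show "z \<in> cyc (one_tilde n) x" unfolding cyc_def by blast
  qed
qed

lemma ncycles_O:
  assumes "n \<ge> 1" shows "ncycles (pm n) (one_tilde n) = 2"
proof -
  have "{cyc (one_tilde n) x | x. x \<in> pm n} = {pos n, {-int n..-1}}"
  proof
    show "{cyc (one_tilde n) x | x. x \<in> pm n} \<subseteq> {pos n, {-int n..-1}}"
      unfolding pm_split using cyc_O_pos cyc_O_neg by blast
    have "1 \<in> pos n" "- 1 \<in> {-int n..-1}" using assms by (auto simp: pos_def)
    then show "{pos n, {-int n..-1}} \<subseteq> {cyc (one_tilde n) x | x. x \<in> pm n}"
      unfolding pm_split using cyc_O_pos cyc_O_neg by blast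
  qed
  moreover have "pos n \<noteq> {-int n..-1}"
  proof -
    have "1 \<in> pos n" using assms by (simp add: pos_def)
    moreover have "(1::int) \<notin> {-int n..-1}" by simp
    ultimately show ?thesis by blast
  qed
  ultimately show ?thesis by (simp add: ncycles_def)
qed

lemma gen_pow:
  assumes "s \<in> gen_group Gs" "g \<in> Gs"
  shows "s \<circ> g ^^ k \<in> gen_group Gs"
proof (induction k)
  case 0 then show ?case using assms by simp
next
  case (Suc k)
  have "s \<circ> g ^^ Suc k = (s \<circ> g ^^ k) \<circ> g" by (simp only: funpow_Suc_right o_assoc)
  then show ?case using gen_mult[OF Suc assms(2)] by metis
qed

lemma gen_pres:
  assumes "\<And>g x. g \<in> Gs \<Longrightarrow> x \<in> P \<Longrightarrow> g x \<in> P \<and> inv g x \<in> P"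
  shows "s \<in> gen_group Gs \<Longrightarrow> x \<in> P \<Longrightarrow> s x \<in> P"
proof (induction arbitrary: x rule: gen_group.induct)
  case gen_id then show ?case by simp
next
  case (gen_mult s g) then show ?case using assms by simp
next
  case (gen_mult_inv s g) then show ?case using assms by simp
qed


lemma ptw: "f \<circ> g = id \<Longrightarrow> f (g x) = x"
  by (metis comp_apply id_apply)

lemma key_ncyc:
  assumes P: "p permutes pm n" and pp: "p \<circ> p = id" and cm: "p \<circ> tau0 n = tau0 n \<circ> p"
  shows "ncycles (pm n) (tau2 n \<circ> (p \<circ> tau0 n)) = ncycles (pm n) (p \<circ> one_tilde n)"
proof -
  have TT: "tau0 n (tau0 n x) = x" for x using T_T ptw by metis
  have ppx: "p (p x) = x" for x using pp ptw by metis
  have cmx: "p (tau0 n x) = tau0 n (p x)" for x using cm by (metis comp_apply)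
  have TOTx: "tau0 n (one_tilde n (tau0 n x)) = one_inv n x" for x using TOT by (metis comp_apply)
  have e1: "tau2 n \<circ> (p \<circ> tau0 n) = tau0 n \<circ> (one_inv n \<circ> p) \<circ> tau0 n"
    by (simp add: tau2_eq fun_eq_iff)
  have e2: "one_inv n \<circ> p = p \<circ> (p \<circ> one_inv n) \<circ> p"
    by (simp add: fun_eq_iff ppx)
  have e3: "p \<circ> one_inv n = tau0 n \<circ> (p \<circ> one_tilde n) \<circ> tau0 n"
    by (simp add: fun_eq_iff cmx TOTx flip: TOTx)
  have Pm: "p x \<in> pm n \<longleftrightarrow> x \<in> pm n" for x using P by (simp add: permutes_in_image)
  have "ncycles (pm n) (tau2 n \<circ> (p \<circ> tau0 n)) = ncycles (pm n) (one_inv n \<circ> p)"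
    unfolding e1 by (rule ncycles_conj[OF T_T T_mem])
  also have "\<dots> = ncycles (pm n) (p \<circ> one_inv n)"
    unfolding e2 by (rule ncycles_conj[OF pp Pm])
  also have "\<dots> = ncycles (pm n) (p \<circ> one_tilde n)"
    unfolding e3 by (rule ncycles_conj[OF T_T T_mem])
  finally show ?thesis .
qed


lemma Tx: "x \<in> pm n \<Longrightarrow> tau0 n x = - x"
  by (simp add: tau0_def)

lemma neg_pm: "x \<in> pm n \<Longrightarrow> - x \<in> pm n"
  by (simp add: pm_def)

lemma pos_pm: "x \<in> pos n \<Longrightarrow> x \<in> pm n"
  by (simp add: pm_def pos_def)

lemma trans_lemma:
  assumes a: "a \<in> pos n" and b: "p (- a) \<in> pos n" and pa: "p (p (- a)) = - a"
  shows "\<forall>x\<in>pm n. \<forall>y\<in>pm n. \<exists>g\<in>gen_group {p, one_tilde n}. g x = y"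
proof (intro ballI)
  fix x y assume x: "x \<in> pm n" and y: "y \<in> pm n"
  let ?G = "gen_group {p, one_tilde n}"
  let ?O = "one_tilde n"
  have Op: "id \<circ> ?O ^^ k \<in> ?G" for k by (rule gen_pow) (auto intro: gen_id)
  have Opp: "(id \<circ> ?O ^^ k2) \<circ> p \<circ> ?O ^^ k1 \<in> ?G" for k1 k2
    by (rule gen_pow[OF gen_mult[OF Op]]) auto
  have na: "- a \<in> {-int n..-1}" using a by (simp add: pos_def)
  show "\<exists>g\<in>?G. g x = y"
  proof (cases "x \<in> pos n")
    case xp: True
    show ?thesis
    proof (cases "y \<in> pos n")
      case True
      then show ?thesis using Op reach_pos[OF xp True] by (metis comp_apply id_apply)
    next
      case False
      then have yn: "y \<in> {-int n..-1}" using y pm_split by blast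
      define k1 where "k1 = nat ((p (- a) - x) mod int n)"
      define k2 where "k2 = nat ((y - (- a)) mod int n)"
      have "((id \<circ> ?O ^^ k2) \<circ> p \<circ> ?O ^^ k1) x = y"
        using reach_pos[OF xp b] reach_neg[OF na yn] pa by (simp add: k1_def k2_def)
      then show ?thesis using Opp by blast
    qed
  next
    case xn0: False
    then have xn: "x \<in> {-int n..-1}" using x pm_split by blast
    show ?thesis
    proof (cases "y \<in> pos n")
      case True
      define k1 where "k1 = nat ((- a - x) mod int n)"
      define k2 where "k2 = nat ((y - p (- a)) mod int n)"
      have "((id \<circ> ?O ^^ k2) \<circ> p \<circ> ?O ^^ k1) x = y"
        using reach_neg[OF xn na] reach_pos[OF b True] by (simp add: k1_def k2_def)
      then show ?thesis using Opp by blast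
    next
      case False
      then have yn: "y \<in> {-int n..-1}" using y pm_split by blast
      then show ?thesis using Op reach_neg[OF xn yn] by (metis comp_apply id_apply)
    qed
  qed
qed

lemma perm_invol:
  assumes "fpf_involution A f" shows "f \<circ> f = id"
proof
  fix x show "(f \<circ> f) x = id x"
    using assms unfolding fpf_involution_def by (cases "x \<in> A") (auto simp: permutes_not_in)
qed

lemma fwd:
  assumes t: "t1 \<in> b1 n"
  shows "t1 \<circ> tau0 n \<in> NC2delta n"
proof -
  let ?T = "tau0 n" let ?O = "one_tilde n"
  define p where "p = t1 \<circ> ?T"
  have F: "fpf_involution (pm n) t1" and N: "ncycles (pm n) (tau2 n \<circ> t1) = n"
    and C: "?T \<circ> t1 = t1 \<circ> ?T" and FP: "\<forall>x\<in>pm n. (?T \<circ> t1) x \<noteq> x"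
    and E: "\<exists>a\<in>pos n. t1 a \<in> pos n"
    using t unfolding b1_def by blast+
  have tt: "t1 \<circ> t1 = id" by (rule perm_invol[OF F])
  have ttx: "t1 (t1 x) = x" for x using tt ptw by metis
  have TT: "?T (?T x) = x" for x using T_T ptw by metis
  have Cx: "?T (t1 x) = t1 (?T x)" for x using C by (metis comp_apply)
  have Pt: "t1 permutes pm n" using F by (simp add: fpf_involution_def)
  have P: "p permutes pm n" unfolding p_def by (rule permutes_compose[OF T_permutes Pt])
  have pp: "p \<circ> p = id" by (simp add: p_def fun_eq_iff flip: Cx) (simp add: Cx TT ttx)
  have ppx: "p (p x) = x" for x using pp ptw by metis
  have cm: "p \<circ> ?T = ?T \<circ> p" by (simp add: p_def fun_eq_iff Cx)
  have cmx: "p (?T x) = ?T (p x)" for x using cm by (metis comp_apply)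
  have Pm: "p x \<in> pm n \<longleftrightarrow> x \<in> pm n" for x using P by (simp add: permutes_in_image)
  have nf: "p x \<noteq> x" if "x \<in> pm n" for x
  proof -
    have "p x = ?T (t1 x)" by (simp add: p_def Cx)
    then show ?thesis using FP that by simp
  qed
  have fp: "fpf_involution (pm n) p"
    unfolding fpf_involution_def using P ppx nf by auto
  obtain a where a: "a \<in> pos n" "t1 a \<in> pos n" using E by blast
  have pa: "p (- a) = t1 a" using a by (simp add: p_def tau0_def pos_pm neg_pm)
  have TR: "\<forall>x\<in>pm n. \<forall>y\<in>pm n. \<exists>g\<in>gen_group {p, ?O}. g x = y"
    by (rule trans_lemma[OF a(1)]) (use a pa ppx in metis)+
  have n1: "n \<ge> 1" using a by (auto simp: pos_def)
  have c1: "2 * ncycles (pm n) p = 2 * n"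
    using ncycles_invol[OF pp _ _ finite_pm] fp card_pm Pm
    by (metis fpf_involution_def)
  have ip: "inv p = p" by (rule inv_unique_comp[OF pp pp])
  have pT: "p \<circ> ?T = t1" by (simp add: p_def fun_eq_iff TT)
  have c2: "ncycles (pm n) (inv p \<circ> ?O) = n"
    using key_ncyc[OF P pp cm] N by (simp add: ip pT)
  have c3: "ncycles (pm n) ?O = 2" by (rule ncycles_O[OF n1])
  have R3: "\<forall>r\<in>pos n. \<not> p (- r) = r"
  proof
    fix r assume r: "r \<in> pos n"
    have "p (- r) = t1 r" using r by (simp add: p_def tau0_def pos_pm neg_pm)
    then show "\<not> p (- r) = r" using F r pos_pm unfolding fpf_involution_def by auto
  qed
  have R4: "\<forall>r\<in>pm n. \<forall>s\<in>pm n. r \<noteq> s \<and> p r = s \<longrightarrow> p (- s) = - r"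
  proof (intro ballI impI)
    fix r s assume r: "r \<in> pm n" and s: "s \<in> pm n" and rs: "r \<noteq> s \<and> p r = s"
    have "p (- s) = p (?T s)" using s by (simp add: Tx)
    also have "\<dots> = ?T (p (p r))" using rs by (simp add: cmx)
    also have "\<dots> = - r" using r by (simp add: ppx Tx)
    finally show "p (- s) = - r" .
  qed
  have "p \<in> NC2delta n"
    unfolding NC2delta_def using fp TR c1 c2 c3 R3 R4 by auto
  then show ?thesis by (simp add: p_def)
qed


lemma bwd:
  assumes pN: "p \<in> NC2delta n"
  shows "p \<circ> tau0 n \<in> b1 n"
proof -
  let ?T = "tau0 n" let ?O = "one_tilde n"
  define t1 where "t1 = p \<circ> ?T"
  have F: "fpf_involution (pm n) p"
    and TR: "\<forall>x\<in>pm n. \<forall>y\<in>pm n. \<exists>g\<in>gen_group {p, ?O}. g x = y"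
    and CY: "ncycles (pm n) p + ncycles (pm n) (inv p \<circ> ?O) + ncycles (pm n) ?O = 2 * n + 2"
    and R3: "\<forall>r\<in>pos n. \<not> (p (- r) = r)"
    and R4: "\<forall>r\<in>pm n. \<forall>s\<in>pm n. r \<noteq> s \<and> p r = s \<longrightarrow> p (- s) = - r"
    using pN unfolding NC2delta_def by blast+
  have n1: "n \<ge> 1"
  proof (rule ccontr)
    assume "\<not> n \<ge> 1" then have "pm n = {}" by (auto simp: pm_def)
    then show False using CY by (simp add: ncycles_def)
  qed
  have P: "p permutes pm n" using F by (simp add: fpf_involution_def)
  have pp: "p \<circ> p = id" by (rule perm_invol[OF F])
  have ppx: "p (p x) = x" for x using pp ptw by metis
  have TT: "?T (?T x) = x" for x using T_T ptw by metis
  have Pm: "p x \<in> pm n \<longleftrightarrow> x \<in> pm n" for x using P by (simp add: permutes_in_image)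
  have nf: "p x \<noteq> x" if "x \<in> pm n" for x using F that by (simp add: fpf_involution_def)
  have cmx: "p (?T x) = ?T (p x)" for x
  proof (cases "x \<in> pm n")
    case True
    have "p (- x) = - p x" using R4 Pm[of x] True nf[of "p x"] ppx[of x]
      by (metis Pm)
    then show ?thesis using True Pm by (simp add: Tx)
  next
    case False then show ?thesis using P Pm by (simp add: tau0_def permutes_not_in)
  qed
  have cm: "p \<circ> ?T = ?T \<circ> p" by (simp add: fun_eq_iff cmx)
  have Pt: "t1 permutes pm n" unfolding t1_def by (rule permutes_compose[OF T_permutes P])
  have ttx: "t1 (t1 x) = x" for x by (simp add: t1_def cmx ppx TT)
  have tnf: "t1 x \<noteq> x" if x: "x \<in> pm n" for x
  proof
    assume eq: "t1 x = x"
    then have e: "p (- x) = x" using x by (simp add: t1_def Tx)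
    show False
    proof (cases "x \<in> pos n")
      case True then show False using R3 e by blast
    next
      case False
      then have "- x \<in> pos n" using x by (auto simp: pm_def pos_def)
      moreover have "p (- (- x)) = - x" using ppx[of "- x"] e by simp
      ultimately show False using R3 by blast
    qed
  qed
  have Ft: "fpf_involution (pm n) t1"
    unfolding fpf_involution_def using Pt ttx tnf by auto
  have ip: "inv p = p" by (rule inv_unique_comp[OF pp pp])
  have c1: "2 * ncycles (pm n) p = 2 * n"
    using ncycles_invol[OF pp _ _ finite_pm] F card_pm Pm
    by (metis fpf_involution_def)
  have c3: "ncycles (pm n) ?O = 2" by (rule ncycles_O[OF n1])
  have N: "ncycles (pm n) (tau2 n \<circ> t1) = n"
    using key_ncyc[OF P pp cm] CY c1 c3 by (simp add: ip t1_def)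
  have C: "?T \<circ> t1 = t1 \<circ> ?T" by (simp add: t1_def fun_eq_iff cmx)
  have FP: "\<forall>x\<in>pm n. (?T \<circ> t1) x \<noteq> x"
    using nf by (simp add: t1_def flip: cmx) (simp add: TT)
  have E: "\<exists>a\<in>pos n. t1 a \<in> pos n"
  proof (rule ccontr)
    assume "\<not> (\<exists>a\<in>pos n. t1 a \<in> pos n)"
    then have H: "\<forall>a\<in>pos n. p (- a) \<notin> pos n" by (simp add: t1_def Tx pos_pm)
    have pres: "g x \<in> pos n \<and> inv g x \<in> pos n" if "g \<in> {p, ?O}" "x \<in> pos n" for g x
    proof -
      have pP: "p y \<in> pos n" if y: "y \<in> pos n" for y
      proof (rule ccontr)
        assume "p y \<notin> pos n"
        then have "- p y \<in> pos n" using y Pm[of y] by (auto simp: pm_def pos_def)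
        then have "p (- (- p y)) \<notin> pos n" using H by blast
        then show False using y by (simp add: ppx)
      qed
      have OP: "?O y \<in> pos n" "one_inv n y \<in> pos n" if "y \<in> pos n" for y
        using that by (auto simp: one_tilde_def one_inv_def pos_def pm_def)
      show ?thesis using that pP OP by (auto simp: ip inv_O)
    qed
    have "1 \<in> pm n" "- 1 \<in> pm n" using n1 by (auto simp: pm_def)
    then obtain g where g: "g \<in> gen_group {p, ?O}" "g 1 = - 1" using TR by blast
    have "1 \<in> pos n" using n1 by (simp add: pos_def)
    then have "g 1 \<in> pos n" using gen_pres[OF _ g(1)] pres by blast
    then show False using g(2) by (simp add: pos_def)
  qed
  have "t1 \<in> b1 n" unfolding b1_def using Ft N C FP E by blast
  then show ?thesis by (simp add: t1_def)
qed

theorem proposition5: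
  fixes n :: nat
  assumes "even n"
  shows "(\<forall>t1\<in>b1 n. t1 \<circ> tau0 n \<in> NC2delta n)
         \<and> bij_betw (\<lambda>t1. t1 \<circ> tau0 n) (b1 n) (NC2delta n)"
proof -
  have TT: "tau0 n (tau0 n x) = x" for x using T_T ptw by metis
  have inj: "inj_on (\<lambda>t1. t1 \<circ> tau0 n) (b1 n)"
  proof (rule inj_onI)
    fix x y assume "x \<circ> tau0 n = y \<circ> tau0 n"
    then have "x \<circ> tau0 n \<circ> tau0 n = y \<circ> tau0 n \<circ> tau0 n" by simp
    then show "x = y" by (simp add: fun_eq_iff TT)
  qed
  have img: "(\<lambda>t1. t1 \<circ> tau0 n) ` b1 n = NC2delta n"
  proof
    show "(\<lambda>t1. t1 \<circ> tau0 n) ` b1 n \<subseteq> NC2delta n" using fwd by blast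
    show "NC2delta n \<subseteq> (\<lambda>t1. t1 \<circ> tau0 n) ` b1 n"
    proof
      fix p assume "p \<in> NC2delta n"
      then have "p \<circ> tau0 n \<in> b1 n" by (rule bwd)
      moreover have "p = (p \<circ> tau0 n) \<circ> tau0 n" by (simp add: fun_eq_iff TT)
      ultimately show "p \<in> (\<lambda>t1. t1 \<circ> tau0 n) ` b1 n" by blast
    qed
  qed
  show ?thesis using fwd inj img by (simp add: bij_betw_def)
qed

end
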